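(* For every integer $m\ge1$, as formal power series in $q$, \[ \frac{1}{(q;q)_{\infty}} \sum_{l=0}^{m-1}(-1)^{l} q^{\frac{l(3l+1)}{2}}(1-q^{2l+1})= 1+(-1)^{m-1}\sum_{d=1}^{\infty} \frac{q^{d^2+d+\binom{m}{2}}}{(q;q)_{2d}} \frac{1-q^m}{1-q^d}\begin{bmatrix}2d\\ d+m\end{bmatrix}_q \] and \[ \frac{1}{(q;q)_{\infty}} \sum_{l=0}^{m-1}(-1)^{l} q^{\frac{l(3l-1)}{2}}(1-q^{4l+2})= 1+(-1)^{m-1}\sum_{d=1}^{\infty} \frac{q^{d^2+\binom{m}{2}}}{(q;q)_{2d}} \frac{1-q^m}{1-q^d}\begin{bmatrix}2d\\ d+m\end{bmatrix}_q. \]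
   Context: Notation: $(a;q)_n=(1-a)(1-aq)\cdots(1-aq^{n-1})$, $(a;q)_\infty=\prod_{k\ge0}(1-aq^k)$, and $\begin{bmatrix}n\\k\end{bmatrix}_q=\frac{(q;q)_n}{(q;q)_k(q;q)_{n-k}}$ for $n\ge k\ge0$ and $0$ otherwise (so terms with $d<m$ vanish). *)

theory Defs
  imports "HOL-Analysis.Analysis" "HOL-Computational_Algebra.Formal_Power_Series"
begin

definition qpoch :: "nat \<Rightarrow> rat fps" where
  "qpoch n = (\<Prod>k<n. 1 - fps_X ^ (k + 1))"

text \<open>Infinite q-Pochhammer symbol (q;q)_infinity, as an infinite product
  in the (subdegree) topology of formal power series.\<close>
definition qpoch_inf :: "rat fps" where
  "qpoch_inf = (\<Prod>k. 1 - fps_X ^ (k + 1))"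

definition qbinom :: "nat \<Rightarrow> nat \<Rightarrow> rat fps" where
  "qbinom n k = (if k \<le> n then qpoch n / (qpoch k * qpoch (n - k)) else 0)"

end

theory Submission imports Defs "HOL-Computational_Algebra.Formal_Laurent_Series" begin

unbundle no vec_syntax
notation fps_nth (infixl "$" 75)

abbreviation qX :: "rat fps" where "qX \<equiv> fps_X"

definition fsum :: "(nat \<Rightarrow> rat fps) \<Rightarrow> rat fps" where
  "fsum f = Abs_fps (\<lambda>n. \<Sum>k\<le>n. f k $ n)"

definition good :: "(nat \<Rightarrow> rat fps) \<Rightarrow> bool" where
  "good f \<longleftrightarrow> (\<forall>k n. n < k \<longrightarrow> f k $ n = 0)"

lemma fsum_nth: "fsum f $ n = (\<Sum>k\<le>n. f k $ n)"
  by (simp add: fsum_def)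

lemma good_sums: assumes "good f" shows "f sums fsum f"
  unfolding sums_def
proof (rule tendsto_fpsI)
  fix n
  show "\<forall>\<^sub>F N in sequentially. (\<Sum>i<N. f i) $ n = fsum f $ n"
    using eventually_gt_at_top[of n]
  proof eventually_elim
    case (elim N)
    have "(\<Sum>i<N. f i) $ n = (\<Sum>i<N. f i $ n)" by (simp add: fps_sum_nth)
    also have "\<dots> = (\<Sum>i\<le>n. f i $ n)"
      by (rule sum.mono_neutral_right) (use elim assms in \<open>auto simp: good_def\<close>)
    finally show ?case by (simp add: fsum_nth)
  qed
qed

lemma good_suminf: "good f \<Longrightarrow> suminf f = fsum f"
  using good_sums sums_unique by metis

lemma good_Xpow: assumes "\<And>k. k \<le> e k" shows "good (\<lambda>k. qX ^ e k * g k)"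
  unfolding good_def using assms by (auto simp: fps_X_power_mult_nth) (meson leD less_le_trans)

lemma fsum_add: "fsum (\<lambda>k. f k + g k) = fsum f + fsum g"
  by (simp add: fps_eq_iff fsum_nth sum.distrib)

lemma fsum_diff: "fsum (\<lambda>k. f k - g k) = fsum f - fsum g"
  by (simp add: fps_eq_iff fsum_nth sum_subtractf)

lemma fsum_cmult: assumes "good f" shows "fsum (\<lambda>k. c * f k) = c * fsum f"
proof (rule fps_ext)
  fix n
  have "fsum (\<lambda>k. c * f k) $ n = (\<Sum>k\<le>n. \<Sum>i=0..n. c $ i * f k $ (n - i))"
    by (simp add: fsum_nth fps_mult_nth)
  also have "\<dots> = (\<Sum>i=0..n. \<Sum>k\<le>n. c $ i * f k $ (n - i))"
    by (rule sum.swap)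
  also have "\<dots> = (\<Sum>i=0..n. c $ i * (\<Sum>k\<le>n - i. f k $ (n - i)))"
  proof (rule sum.cong[OF refl])
    fix i assume i: "i \<in> {0..n}"
    have "(\<Sum>k\<le>n. c $ i * f k $ (n - i)) = (\<Sum>k\<le>n - i. c $ i * f k $ (n - i))"
      by (rule sum.mono_neutral_right) (use assms in \<open>auto simp: good_def\<close>)
    then show "(\<Sum>k\<le>n. c $ i * f k $ (n - i)) = c $ i * (\<Sum>k\<le>n - i. f k $ (n - i))"
      by (simp add: sum_distrib_left)
  qed
  also have "\<dots> = (c * fsum f) $ n" by (simp add: fps_mult_nth fsum_nth)
  finally show "fsum (\<lambda>k. c * f k) $ n = (c * fsum f) $ n" .
qed

lemma good_shift: "good f \<Longrightarrow> good (\<lambda>k. f (Suc k))"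
  by (auto simp: good_def)

lemma fsum_shift: assumes "good f" shows "fsum f = f 0 + fsum (\<lambda>k. f (Suc k))"
proof (rule fps_ext)
  fix n
  have "fsum f $ n = f 0 $ n + (\<Sum>k<n. f (Suc k) $ n)"
    by (simp add: fsum_nth sum.atMost_shift)
  also have "(\<Sum>k<n. f (Suc k) $ n) = (\<Sum>k\<le>n. f (Suc k) $ n)"
    using assms by (simp add: lessThan_Suc_atMost[symmetric] good_def)
  finally show "fsum f $ n = (f 0 + fsum (\<lambda>k. f (Suc k))) $ n" by (simp add: fsum_nth)
qed

lemma fsum_drop: assumes "good f" "\<And>k. k < s \<Longrightarrow> f k = 0"
  shows "fsum f = fsum (\<lambda>k. f (k + s))"
  using assms
proof (induction s arbitrary: f)
  case 0 then show ?case by simp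
next
  case (Suc s)
  have "fsum f = fsum (\<lambda>k. f (Suc k))"
    using fsum_shift[OF Suc.prems(1)] Suc.prems(2)[of 0] by simp
  also have "\<dots> = fsum (\<lambda>k. f (Suc (k + s)))"
    using Suc.IH[of "\<lambda>k. f (Suc k)"] Suc.prems good_shift by auto
  finally show ?case by simp
qed

abbreviation qp :: "nat \<Rightarrow> rat fps" where "qp \<equiv> qpoch"

lemma qp_0 [simp]: "qp 0 = 1" by (simp add: qpoch_def)
lemma qp_Suc: "qp (Suc n) = qp n * (1 - qX ^ Suc n)"
  by (simp add: qpoch_def)
lemma qp_nth0 [simp]: "qp n $ 0 = 1"
  by (induction n) (simp_all add: qp_Suc)
lemma one_minus_Xpow_nth0 [simp]: "0 < j \<Longrightarrow> (1 - qX ^ j) $ 0 = 1"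
  by simp

lemma qp_stable: "n \<le> N \<Longrightarrow> qp N $ n = qp n $ n"
proof (induction N)
  case 0 then show ?case by simp
next
  case (Suc N)
  show ?case
  proof (cases "n = Suc N")
    case False
    then have "n \<le> N" using Suc.prems by simp
    have "qp (Suc N) $ n = qp N $ n - (qX ^ Suc N * qp N) $ n"
      by (simp add: qp_Suc algebra_simps)
    also have "(qX ^ Suc N * qp N) $ n = 0"
      using \<open>n \<le> N\<close> by (simp add: fps_X_power_mult_nth del: power_Suc)
    finally show ?thesis using Suc.IH \<open>n \<le> N\<close> by simp
  qed simp
qed

definition Qf :: "rat fps" where "Qf = Abs_fps (\<lambda>n. qp n $ n)"

lemma Q_lim: "(\<lambda>N. \<Prod>i\<le>N. 1 - qX ^ (i + 1)) \<longlonglongrightarrow> Qf"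
proof (rule tendsto_fpsI)
  fix n
  show "\<forall>\<^sub>F N in sequentially. (\<Prod>i\<le>N. 1 - qX ^ (i + 1)) $ n = Qf $ n"
    using eventually_ge_at_top[of n]
  proof eventually_elim
    case (elim N)
    have "(\<Prod>i\<le>N. 1 - qX ^ (i + 1)) = qp (Suc N)"
      by (simp only: qpoch_def lessThan_Suc_atMost)
    moreover have "qp (Suc N) $ n = qp n $ n" using qp_stable[of n "Suc N"] elim by simp
    moreover have "Qf $ n = qp n $ n" by (simp add: Qf_def)
    ultimately show ?case by simp
  qed
qed

lemma Q_eq: "qpoch_inf = Qf"
proof -
  have "Qf $ 0 = 1" by (simp add: Qf_def)
  then have "Qf \<noteq> 0" by auto
  then have "(\<lambda>k. 1 - qX ^ (k + 1)) has_prod Qf"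
    unfolding has_prod_def raw_has_prod_def using Q_lim by simp
  then show ?thesis unfolding qpoch_inf_def by (rule has_prod_unique[symmetric])
qed

lemma Q_nth: "n \<le> N \<Longrightarrow> qpoch_inf $ n = qp N $ n"
  using qp_stable[of n N] by (simp add: Q_eq Qf_def)

lemma Q_nth0 [simp]: "qpoch_inf $ 0 = 1"
  by (simp add: Q_nth[of 0 0])

lemma inverse_agree:
  fixes f g :: "rat fps"
  assumes "\<And>j. j \<le> n \<Longrightarrow> f $ j = g $ j" "f $ 0 \<noteq> 0" "g $ 0 \<noteq> 0"
  shows "inverse f $ n = inverse g $ n"
proof -
  have "inverse f - inverse g = inverse f * inverse g * (g - f)"
  proof -
    have "inverse f * inverse g * (g - f) = inverse f * (inverse g * g) - inverse g * (inverse f * f)"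
      by (simp add: algebra_simps)
    also have "\<dots> = inverse f - inverse g"
      using assms(2,3) by (simp add: inverse_mult_eq_1)
    finally show ?thesis by simp
  qed
  moreover have "(inverse f * inverse g * (g - f)) $ n = 0"
    unfolding fps_mult_nth[of _ "g - f"] using assms(1) by (intro sum.neutral) auto
  ultimately have "(inverse f - inverse g) $ n = 0" by simp
  then show ?thesis by simp
qed

lemma invQ_nth: "inverse qpoch_inf $ n = inverse (qp n) $ n"
  by (rule inverse_agree) (auto simp: Q_nth)

lemma phi_inv [simp]: "f $ 0 \<noteq> 0 \<Longrightarrow> fps_to_fls (inverse f) = inverse (fps_to_fls (f :: rat fps))"
  by (simp add: fls_inverse_fps_to_fls)

lemma phi_div [simp]: "g $ 0 \<noteq> 0 \<Longrightarrow> fps_to_fls (f / g) = fps_to_fls f / fps_to_fls (g :: rat fps)"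
  using fls_divide_fps_to_fls[of g f] by simp

lemma phi_qp_ne [simp]: "fps_to_fls (qp n) \<noteq> 0"
proof -
  have "qp n \<noteq> 0" using qp_nth0[of n] by (metis fps_zero_nth zero_neq_one)
  then show ?thesis by simp
qed

lemma fls_X_ne [simp]: "(fls_X :: rat fls) \<noteq> 0"
  by (metis fls_X_nonzero zero_neq_one)

definition om :: "nat \<Rightarrow> rat fps" where "om j = 1 - qX ^ j"

lemma om_nth0 [simp]: "0 < j \<Longrightarrow> om j $ 0 = 1" by (simp add: om_def)
lemma phi_om: "fps_to_fls (om j) = 1 - fls_X ^ j" by (simp add: om_def fps_to_fls_power)
lemma phi_om_ne [simp]: "0 < j \<Longrightarrow> fps_to_fls (om j) \<noteq> 0"
proof -
  assume j: "0 < j"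
  have "om j \<noteq> 0" using om_nth0[OF j] by (metis fps_zero_nth zero_neq_one)
  then show ?thesis by simp
qed
lemma qp_Suc': "qp (Suc n) = qp n * om (Suc n)" by (simp add: qp_Suc om_def)

lemma qp_ne [simp]: "qp n \<noteq> 0"
  using qp_nth0[of n] by (metis fps_zero_nth zero_neq_one)
lemma om_ne [simp]: "0 < j \<Longrightarrow> om j \<noteq> 0"
  using om_nth0[of j] by (metis fps_zero_nth zero_neq_one)

lemmas phi_simps = fls_times_fps_to_fls fps_to_fls_power

definition dt :: "nat \<Rightarrow> nat \<Rightarrow> nat \<Rightarrow> rat fps" where
  "dt a b k = qX ^ (k * k + b * k) * inverse (qp k * qp (k + a))"

definition P :: "nat \<Rightarrow> nat \<Rightarrow> rat fps" where
  "P a b = fsum (dt a b)"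

lemma good_dt: "good (dt a b)"
  unfolding dt_def by (rule good_Xpow) (meson le_add1 le_square order_trans)

lemma dt_rel2: "dt a b k = dt (Suc a) b k - qX ^ Suc a * dt (Suc a) (Suc b) k"
proof -
  have q: "qp (k + Suc a) = qp (k + a) * (1 - qX ^ Suc (k + a))" by (simp add: qp_Suc)
  have e: "k * k + Suc b * k = (k * k + b * k) + k" by simp
  show ?thesis
    apply (subst fps_to_fls_eq_iff[symmetric])
    apply (simp add: dt_def e power_add phi_simps qp_Suc')
    apply (simp add: field_simps)
    apply (simp add: phi_om algebra_simps power_add)
    done
qed

lemma good_diff: "good f \<Longrightarrow> good g \<Longrightarrow> good (\<lambda>k. f k - g k)"
  by (simp add: good_def)

lemma good_add: "good f \<Longrightarrow> good g \<Longrightarrow> good (\<lambda>k. f k + g k)"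
  by (simp add: good_def)

lemma dt_rel1: "dt a b (Suc k) - dt a (Suc b) (Suc k) = qX ^ Suc b * dt (Suc a) (Suc (Suc b)) k"
proof -
  have e1: "Suc k * Suc k + b * Suc k = Suc b + (k * k + Suc (Suc b) * k)" by (simp add: algebra_simps)
  have e2: "Suc k * Suc k + Suc b * Suc k = Suc b + (k * k + Suc (Suc b) * k) + Suc k" by (simp add: algebra_simps)
  have e3: "Suc k + a = k + Suc a" by simp
  show ?thesis
    apply (subst fps_to_fls_eq_iff[symmetric])
    apply (simp only: dt_def e1 e2 e3)
    apply (simp add: power_add phi_simps qp_Suc'[of k])
    apply (simp add: field_simps)
    apply (simp add: phi_om algebra_simps power_add)
    done
qed

lemma P_rel2: "P a b = P (Suc a) b - qX ^ Suc a * P (Suc a) (Suc b)"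
proof -
  have "dt a b = (\<lambda>k. dt (Suc a) b k - qX ^ Suc a * dt (Suc a) (Suc b) k)"
    by (rule ext) (rule dt_rel2)
  then show ?thesis unfolding P_def by (simp add: fsum_diff fsum_cmult[OF good_dt])
qed

lemma P_rel1: "P a b = P a (Suc b) + qX ^ Suc b * P (Suc a) (Suc (Suc b))"
proof -
  have "P a b - P a (Suc b) = fsum (\<lambda>k. dt a b k - dt a (Suc b) k)"
    unfolding P_def by (simp add: fsum_diff)
  also have "\<dots> = (dt a b 0 - dt a (Suc b) 0) + fsum (\<lambda>k. dt a b (Suc k) - dt a (Suc b) (Suc k))"
    by (rule fsum_shift) (intro good_diff good_dt)
  also have "dt a b 0 - dt a (Suc b) 0 = 0" by (simp add: dt_def)
  also have "fsum (\<lambda>k. dt a b (Suc k) - dt a (Suc b) (Suc k)) = fsum (\<lambda>k. qX ^ Suc b * dt (Suc a) (Suc (Suc b)) k)"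
    by (simp add: dt_rel1)
  also have "\<dots> = qX ^ Suc b * P (Suc a) (Suc (Suc b))"
    unfolding P_def by (rule fsum_cmult[OF good_dt])
  finally show ?thesis by (simp add: algebra_simps)
qed

lemma D_rel: "P a a - P (Suc a) (Suc a) = - (qX ^ Suc a * (P (Suc a) (Suc a) - P (Suc (Suc a)) (Suc (Suc a))))"
  using P_rel2[of a a] P_rel1[of "Suc a" a] by (simp add: algebra_simps)

lemma D_zero: "(P a a - P (Suc a) (Suc a)) $ n = 0"
proof (induction n arbitrary: a rule: less_induct)
  case (less n)
  show ?case
  proof (cases "n < Suc a")
    case True then show ?thesis by (subst D_rel) (simp add: fps_X_power_mult_nth del: power_Suc)
  next
    case False
    then have "n - Suc a < n" by simp
    then show ?thesis using less.IH[of "n - Suc a" "Suc a"] False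
      by (subst D_rel) (simp add: fps_X_power_mult_nth del: power_Suc)
  qed
qed

lemma P_diag: "P a a = P 0 0"
proof (induction a)
  case (Suc a)
  have "P (Suc a) (Suc a) = P a a"
    using D_zero[of a] by (intro fps_ext) simp
  then show ?case using Suc by simp
qed simp

lemma P_diag_nth: "P n n $ n = inverse (qp n) $ n"
proof -
  have "P n n $ n = (\<Sum>k\<le>n. dt n n k $ n)" by (simp add: P_def fsum_nth)
  also have "\<dots> = (\<Sum>k\<le>n. if k = 0 then inverse (qp n) $ n else 0)"
  proof (rule sum.cong[OF refl])
    fix k assume "k \<in> {..n}"
    show "dt n n k $ n = (if k = 0 then inverse (qp n) $ n else 0)"
    proof (cases k)
      case 0 then show ?thesis by (simp add: dt_def)
    next
      case (Suc j)
      then have "n < k * k + n * k" by simp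
      then show ?thesis using Suc by (simp add: dt_def fps_X_power_mult_nth del: mult_Suc mult_Suc_right)
    qed
  qed
  also have "\<dots> = inverse (qp n) $ n" by simp
  finally show ?thesis .
qed

lemma P_diag_eq: "P a a = inverse qpoch_inf"
proof (rule fps_ext)
  fix n
  have "P a a $ n = P n n $ n" using P_diag[of a] P_diag[of n] by simp
  then show "P a a $ n = inverse qpoch_inf $ n" by (simp add: P_diag_nth invQ_nth)
qed

lemma P_off: "P (Suc c) c = (1 + qX ^ Suc c) * inverse qpoch_inf"
  using P_rel1[of "Suc c" c] by (simp add: P_diag_eq algebra_simps)

definition Tg :: "nat \<Rightarrow> nat \<Rightarrow> nat \<Rightarrow> rat fps" where
  "Tg e m d = (let d' = Suc d in qX ^ (d'\<^sup>2 + e * d' + (m choose 2)) / qp (2 * d')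
       * (om m / om d') * qbinom (2 * d') (d' + m))"

definition E0 :: "nat \<Rightarrow> nat \<Rightarrow> nat" where "E0 e m = m * m + e * m + (m choose 2)"

lemma choose2_Suc: "Suc m choose 2 = m + (m choose 2)"
  by (simp add: numeral_2_eq_2)

lemma om_poly: "om (Suc c) * om (j + 2 * c + 4) + qX ^ Suc c * om (Suc (Suc c)) * om (Suc j)
    = om (2 * Suc c + 1) * om (Suc (Suc j + c))"
  by (simp add: om_def algebra_simps power_add mult_2 numeral_eq_Suc)

lemma aux_ring:
  fixes X XK Xc XE Q B o1 o2 o3 o4 o5 o6 :: "'a::comm_ring_1"
  assumes "o1 * o4 + X * Xc * o2 * o3 = o6 * o5"
  shows "X * (Q * (XK * (Xc * (o3 * (o3 * (o2 * (XE * (B * o4)))))))) + Q * (XK * (o1 * (o3 * (XE * (B * (o4 * o4))))))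
       = Q * (XK * (o3 * (XE * (o5 * (o6 * (B * o4))))))"
proof -
  have "X * (Q * (XK * (Xc * (o3 * (o3 * (o2 * (XE * (B * o4)))))))) + Q * (XK * (o1 * (o3 * (XE * (B * (o4 * o4))))))
      = Q*XK * o3*XE*B * o4 * (o1 * o4 + X * Xc * o2 * o3)" by (simp add: algebra_simps)
  also have "\<dots> = Q * XK * o3 * XE * B * o4 * (o6 * o5)" by (simp only: assms)
  also have "\<dots> = Q * (XK * (o3 * (XE * (o5 * (o6 * (B * o4))))))" by (simp add: algebra_simps)
  finally show ?thesis .
qed

lemma Tg_step_Suc:
  "Tg e (Suc c) (Suc j + c) + Tg e (Suc (Suc c)) (Suc j + c)
     = qX ^ E0 e (Suc c) * om (2 * Suc c + 1) * dt (2 * Suc c + 1) (2 * Suc c + e) (Suc j)"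
proof -
  define N where "N = 2 * Suc (Suc j + c)"
  define K where "K = Suc j * Suc j + (2 * Suc c + e) * Suc j"
  have f1: "qbinom N (Suc (Suc j + c) + Suc c) = qp N / (qp (j + 2 * c + 3) * (qp j * om (Suc j)))"
    by (simp add: qbinom_def N_def qp_Suc'[of j] numeral_eq_Suc add.assoc)
  have i: "Suc (Suc j + c) + Suc (Suc c) = Suc (j + 2 * c + 3)" by simp
  have f3': "qp (Suc (j + 2 * c + 3)) = qp (j + 2 * c + 3) * om (j + 2 * c + 4)"
    using qp_Suc'[of "j + 2 * c + 3"] by (simp add: numeral_eq_Suc)
  have n1: "Suc (j + 2 * c + 3) \<le> N" and n2: "N - Suc (j + 2 * c + 3) = j" by (simp_all add: N_def)
  have "qbinom N (Suc (j + 2 * c + 3)) = qp N / (qp (Suc (j + 2 * c + 3)) * qp j)"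
    by (simp only: qbinom_def if_P[OF n1] n2)
  then have f2: "qbinom N (Suc (Suc j + c) + Suc (Suc c)) = qp N / ((qp (j + 2 * c + 3) * om (j + 2 * c + 4)) * qp j)"
    by (simp only: i f3')
  have f3: "qp (Suc j + (2 * Suc c + 1)) = qp (j + 2 * c + 3) * om (j + 2 * c + 4)"
    by (simp add: qp_Suc' numeral_eq_Suc)
  have f4: "qp (Suc j) = qp j * om (Suc j)" by (rule qp_Suc')
  have g1: "(Suc (Suc j + c))\<^sup>2 + e * Suc (Suc j + c) + (Suc c choose 2) = E0 e (Suc c) + K"
    by (simp add: E0_def K_def power2_eq_square algebra_simps)
  have g2: "(Suc (Suc j + c))\<^sup>2 + e * Suc (Suc j + c) + (Suc (Suc c) choose 2) = E0 e (Suc c) + K + Suc c"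
    by (simp add: E0_def K_def power2_eq_square algebra_simps choose2_Suc)
  have P: "fps_to_fls (om (Suc c)) * fps_to_fls (om (j + 2 * c + 4)) + fls_X ^ Suc c * fps_to_fls (om (Suc (Suc c))) * fps_to_fls (om (Suc j))
    = fps_to_fls (om (2 * Suc c + 1)) * fps_to_fls (om (Suc (Suc j + c)))"
    using arg_cong[OF om_poly, of fps_to_fls] by (simp add: phi_simps del: fps_to_fls_eq_iff)
  have idx: "j + 2 * c + 4 = j + (4 + c * 2)" "Suc (Suc j + c) = Suc (Suc (c + j))"
    "2 * Suc c + 1 = Suc (Suc (Suc (c * 2)))" by simp_all
  have P2: "fps_to_fls (om (Suc c)) * fps_to_fls (om (j + (4 + c * 2))) + fls_X * fls_X ^ c * fps_to_fls (om (Suc (Suc c))) * fps_to_fls (om (Suc j))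
    = fps_to_fls (om (Suc (Suc (Suc (c * 2))))) * fps_to_fls (om (Suc (Suc (c + j))))"
    using P by (simp only: idx power_Suc)
  show ?thesis
    unfolding Tg_def Let_def dt_def
    apply (simp only: N_def[symmetric] f1 f2 f3 f4 g1 g2 K_def[symmetric] power_add)
    apply (subst fps_to_fls_eq_iff[symmetric])
    apply (simp add: phi_simps)
    apply (simp add: field_simps)
    apply (rule aux_ring[OF P2])
    done
qed

lemma Tg_step_0:
  "Tg e (Suc c) c + Tg e (Suc (Suc c)) c
     = qX ^ E0 e (Suc c) * om (2 * Suc c + 1) * dt (2 * Suc c + 1) (2 * Suc c + e) 0"
proof -
  define N where "N = 2 * Suc c"
  have ii: "Suc c + Suc c = N" by (simp add: N_def)
  have f1: "qbinom N (Suc c + Suc c) = qp N / (qp N * qp 0)"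
    unfolding ii by (simp add: qbinom_def)
  have f2: "qbinom N (Suc c + Suc (Suc c)) = 0"
    by (simp add: qbinom_def N_def)
  have f3: "qp (0 + (2 * Suc c + 1)) = qp N * om (Suc N)"
    by (simp add: N_def qp_Suc'[of "2 * Suc c", simplified])
  have g1: "(Suc c)\<^sup>2 + e * Suc c + (Suc c choose 2) = E0 e (Suc c)"
    by (simp add: E0_def power2_eq_square)
  have i: "2 * Suc c + 1 = Suc N" by (simp add: N_def)
  show ?thesis
    unfolding Tg_def Let_def dt_def
    apply (simp only: N_def[symmetric] f1 f2 f3 g1 i)
    apply (subst fps_to_fls_eq_iff[symmetric])
    apply (simp add: phi_simps qp_Suc'[of N])
    apply (simp add: field_simps)
    done
qed

lemma Tg_step:
  "Tg e (Suc c) (k + c) + Tg e (Suc (Suc c)) (k + c)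
     = qX ^ E0 e (Suc c) * om (2 * Suc c + 1) * dt (2 * Suc c + 1) (2 * Suc c + e) k"
  by (cases k) (simp_all only: Tg_step_Suc Tg_step_0 add_0)

lemma Tg_zero: "d < c \<Longrightarrow> Tg e (Suc c) d = 0" "d < c \<Longrightarrow> Tg e (Suc (Suc c)) d = 0"
  by (simp_all add: Tg_def qbinom_def)

lemma good_Tg: "good (Tg e m)"
  unfolding good_def
proof (intro allI impI)
  fix k n :: nat assume nk: "n < k"
  define E where "E = (Suc k)\<^sup>2 + e * Suc k + (m choose 2)"
  have "Tg e m k = qX ^ E * (inverse (qp (2 * Suc k)) * (om m / om (Suc k)) * qbinom (2 * Suc k) (Suc k + m))"
    unfolding Tg_def Let_def E_def by (simp add: fps_divide_unit mult.assoc)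
  moreover have "n < E" using nk by (simp add: E_def power2_eq_square)
  ultimately show "Tg e m k $ n = 0" by (simp add: fps_X_power_mult_nth)
qed

lemma S_step: "fsum (Tg e (Suc c)) + fsum (Tg e (Suc (Suc c)))
   = qX ^ E0 e (Suc c) * om (2 * Suc c + 1) * P (2 * Suc c + 1) (2 * Suc c + e)"
proof -
  have "fsum (Tg e (Suc c)) + fsum (Tg e (Suc (Suc c))) = fsum (\<lambda>d. Tg e (Suc c) d + Tg e (Suc (Suc c)) d)"
    by (simp add: fsum_add)
  also have "\<dots> = fsum (\<lambda>k. Tg e (Suc c) (k + c) + Tg e (Suc (Suc c)) (k + c))"
    by (rule fsum_drop) (simp_all add: good_add good_Tg Tg_zero)
  also have "\<dots> = fsum (\<lambda>k. qX ^ E0 e (Suc c) * om (2 * Suc c + 1) * dt (2 * Suc c + 1) (2 * Suc c + e) k)"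
    by (simp only: Tg_step)
  also have "\<dots> = qX ^ E0 e (Suc c) * om (2 * Suc c + 1) * P (2 * Suc c + 1) (2 * Suc c + e)"
    unfolding P_def by (rule fsum_cmult[OF good_dt])
  finally show ?thesis .
qed

lemma Tg_base_term: "Tg e 1 k = om 1 * dt 1 e (Suc k)"
proof -
  have f1: "qbinom (2 * Suc k) (Suc k + 1) = qp (2 * Suc k) / (qp (Suc (Suc k)) * qp k)"
    by (simp add: qbinom_def)
  have f2: "qp (Suc k + 1) = qp (Suc (Suc k))" by simp
  have g: "(Suc k)\<^sup>2 + e * Suc k + (1 choose 2) = Suc k * Suc k + e * Suc k"
    by (simp add: power2_eq_square)
  show ?thesis
    unfolding Tg_def Let_def dt_def
    apply (simp only: f1 f2 g)
    apply (subst fps_to_fls_eq_iff[symmetric])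
    apply (simp add: phi_simps qp_Suc'[of k])
    apply (simp add: field_simps)
    done
qed

lemma base_gen: "om 1 * P 1 e = 1 + fsum (Tg e 1)"
proof -
  have "P 1 e = dt 1 e 0 + fsum (\<lambda>k. dt 1 e (Suc k))"
    unfolding P_def by (rule fsum_shift[OF good_dt])
  moreover have "om 1 * dt 1 e 0 = 1"
    by (simp add: dt_def qp_Suc'[of 0] inverse_mult_eq_1')
  moreover have "om 1 * fsum (\<lambda>k. dt 1 e (Suc k)) = fsum (Tg e 1)"
  proof -
    have "(\<lambda>k. om 1 * dt 1 e (Suc k)) = Tg e 1" by (rule ext) (simp only: Tg_base_term)
    then show ?thesis using fsum_cmult[OF good_shift[OF good_dt], of "om 1" 1 e] by simp
  qed
  ultimately show ?thesis by (simp add: algebra_simps)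
qed

lemma E0_1_2: "2 * E0 1 m = m * (3 * m + 1)"
  by (induction m) (simp_all add: E0_def choose2_Suc algebra_simps)

lemma E0_0_2: "2 * E0 0 m = m * (3 * m - 1)"
proof (induction m)
  case (Suc m)
  have "3 * Suc m - 1 = 3 * m + 2" by simp
  then show ?case using Suc by (simp add: E0_def choose2_Suc algebra_simps)
qed (simp add: E0_def)

lemma E0_1: "m * (3 * m + 1) div 2 = E0 1 m"
  using E0_1_2[of m] by linarith

lemma E0_0: "m * (3 * m - 1) div 2 = E0 0 m"
  using E0_0_2[of m] by linarith

abbreviation iQ :: "rat fps" where "iQ \<equiv> inverse qpoch_inf"

lemma claim1: "(\<Sum>l<Suc c. (-1) ^ l * qX ^ (l * (3 * l + 1) div 2) * (1 - qX ^ (2 * l + 1))) * iQ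
   = 1 + (-1) ^ c * fsum (Tg 1 (Suc c))"
proof (induction c)
  case 0
  have "(1 - qX) * iQ = om 1 * P 1 1" by (simp add: om_def P_diag_eq)
  then show ?case using base_gen[of 1] by simp
next
  case (Suc c)
  have R: "qX ^ (Suc c * (3 * Suc c + 1) div 2) * (1 - qX ^ (2 * Suc c + 1)) * iQ
      = fsum (Tg 1 (Suc c)) + fsum (Tg 1 (Suc (Suc c)))"
    by (simp only: S_step P_diag_eq E0_1 om_def mult.assoc)
  have "(\<Sum>l<Suc (Suc c). (-1) ^ l * qX ^ (l * (3 * l + 1) div 2) * (1 - qX ^ (2 * l + 1))) * iQ
     = (\<Sum>l<Suc c. (-1) ^ l * qX ^ (l * (3 * l + 1) div 2) * (1 - qX ^ (2 * l + 1))) * iQ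
       + (-1) ^ Suc c * (qX ^ (Suc c * (3 * Suc c + 1) div 2) * (1 - qX ^ (2 * Suc c + 1)) * iQ)"
    by (simp only: sum.lessThan_Suc distrib_right mult.assoc)
  also have "\<dots> = 1 + (-1) ^ Suc c * fsum (Tg 1 (Suc (Suc c)))"
    unfolding Suc.IH R by (simp add: algebra_simps)
  finally show ?case .
qed

lemma claim0: "(\<Sum>l<Suc c. (-1) ^ l * qX ^ (l * (3 * l - 1) div 2) * (1 - qX ^ (4 * l + 2))) * iQ
   = 1 + (-1) ^ c * fsum (Tg 0 (Suc c))"
proof (induction c)
  case 0
  have "(1 - qX ^ 2) * iQ = om 1 * P 1 0"
    using P_off[of 0] by (simp add: om_def algebra_simps power2_eq_square)
  then show ?case using base_gen[of 0] by (simp add: power2_eq_square)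
next
  case (Suc c)
  have f: "1 - qX ^ (4 * Suc c + 2) = om (2 * Suc c + 1) * (1 + qX ^ Suc (2 * Suc c))"
  proof -
    have "4 * Suc c + 2 = (2 * Suc c + 1) + (2 * Suc c + 1)" by simp
    then show ?thesis by (simp only: om_def power_add) (simp add: algebra_simps)
  qed
  have R: "qX ^ (Suc c * (3 * Suc c - 1) div 2) * (1 - qX ^ (4 * Suc c + 2)) * iQ
      = fsum (Tg 0 (Suc c)) + fsum (Tg 0 (Suc (Suc c)))"
  proof -
    have Poff: "P (2 * Suc c + 1) (2 * Suc c) = (1 + qX ^ Suc (2 * Suc c)) * iQ"
      using P_off[of "2 * Suc c"] by simp
    show ?thesis by (simp only: S_step Poff E0_0 f mult.assoc add_0_right)
  qed
  have "(\<Sum>l<Suc (Suc c). (-1) ^ l * qX ^ (l * (3 * l - 1) div 2) * (1 - qX ^ (4 * l + 2))) * iQ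
     = (\<Sum>l<Suc c. (-1) ^ l * qX ^ (l * (3 * l - 1) div 2) * (1 - qX ^ (4 * l + 2))) * iQ
       + (-1) ^ Suc c * (qX ^ (Suc c * (3 * Suc c - 1) div 2) * (1 - qX ^ (4 * Suc c + 2)) * iQ)"
    by (simp only: sum.lessThan_Suc distrib_right mult.assoc)
  also have "\<dots> = 1 + (-1) ^ Suc c * fsum (Tg 0 (Suc (Suc c)))"
    unfolding Suc.IH R by (simp add: algebra_simps)
  finally show ?case .
qed

theorem corollary1p3:
  fixes m :: nat
  assumes "m \<ge> 1"
  shows "(\<Sum>l<m. (-1) ^ l * fps_X ^ (l * (3 * l + 1) div 2) * (1 - fps_X ^ (2 * l + 1))) / qpoch_inf
           = 1 + (-1) ^ (m - 1) * (\<Sum>d. let d' = Suc d in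
               fps_X ^ (d'\<^sup>2 + d' + (m choose 2)) / qpoch (2 * d')
               * ((1 - fps_X ^ m) / (1 - fps_X ^ d')) * qbinom (2 * d') (d' + m))
       \<and> (\<Sum>l<m. (-1) ^ l * fps_X ^ (l * (3 * l - 1) div 2) * (1 - fps_X ^ (4 * l + 2))) / qpoch_inf
           = 1 + (-1) ^ (m - 1) * (\<Sum>d. let d' = Suc d in
               fps_X ^ (d'\<^sup>2 + (m choose 2)) / qpoch (2 * d')
               * ((1 - fps_X ^ m) / (1 - fps_X ^ d')) * qbinom (2 * d') (d' + m))"
proof -
  obtain c where m: "m = Suc c" using assms by (cases m) auto
  have T1: "(\<lambda>d. let d' = Suc d in
               fps_X ^ (d'\<^sup>2 + d' + (m choose 2)) / qpoch (2 * d')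
               * ((1 - fps_X ^ m) / (1 - fps_X ^ d')) * qbinom (2 * d') (d' + m)) = Tg 1 m"
    by (rule ext) (simp add: Tg_def om_def)
  have T0: "(\<lambda>d. let d' = Suc d in
               fps_X ^ (d'\<^sup>2 + (m choose 2)) / qpoch (2 * d')
               * ((1 - fps_X ^ m) / (1 - fps_X ^ d')) * qbinom (2 * d') (d' + m)) = Tg 0 m"
    by (rule ext) (simp add: Tg_def om_def)
  show ?thesis
    unfolding T1 T0 unfolding good_suminf[OF good_Tg] unfolding m diff_Suc_1
    using claim1[of c] claim0[of c] by (simp add: fps_divide_unit)
qed

end
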